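(* Let $T=(V,E)$ be a tree shape and $k$ a positive integer such that for every choice of root $u_0\in V$ there is a root-to-leaf path in $T$ containing at least $k$ turning points. Then any growth process for $T$ starting from a single node in the connectivity graph model requires at least $k-1$ time steps.
   Context: Shapes. Grid points are integer pairs $(x,y)$; two grid points are adjacent if they are at orthogonal (Manhattan) distance $1$. A shape $S=(V,E)$ is a finite connected graph whose nodes occupy distinct grid points and whose edges join only pairs of nodes occupying adjacent points; shapes are considered up to translation. Growth operations. One node, the anchor $u_0$, is stationary; other nodes move relative to it, and a tree is rooted at $u_0$. A growth operation on a node $u$ toward an adjacent grid point $p$ either (i) if $u$ has no edge to $p$, creates a new node $u'$ at $p$ with edge $uu'$; or (ii) if $p$ is occupied by a node $v$ with $uv\in E$, creates a new node $u'$ at $p$, replaces edge $uv$ by edges $uu',u'v$, and translates by one unit, along the axis of $uv$, the part of the tree hanging from whichever of $u,v$ is farther from $u_0$, away from the other endpoint. In one time step a set of operations is applied concurrently, each node receiving at most one operation and all operations having the same cardinal direction; the displacement of each node is the sum of the unit vectors contributed by the operations on its path to $u_0$. The set is collision-free if no two nodes collide during these motions or end at the same point. Growth processes (connectivity graph model). A growth process from an initial shape $S_0$ performs time steps $t=1,2,\dots$, each applying a collision-free set of growth operations to the current shape; no edges are deleted and no edges are created other than by the operations. It grows $S$ from $S_0$ in $t_f$ time steps if the shape obtained after step $t_f$ is $S$. A node $w$ of a path is a turning point of the path if it is an endpoint or its two path-neighbors $v_1,v_2$ satisfy $v_1w\perp wv_2$. *)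

theory Defs
  imports Complex_Main
begin

type_synonym pt = "int \<times> int"

text \<open>A shape is given by its set of nodes (distinct grid points) and its edges
  (unordered pairs of nodes). Shapes are compared up to translation.\<close>
type_synonym shape = "pt set \<times> pt set set"

definition padd :: "pt \<Rightarrow> pt \<Rightarrow> pt" where
  "padd p q = (fst p + fst q, snd p + snd q)"

definition psmul :: "int \<Rightarrow> pt \<Rightarrow> pt" where
  "psmul c p = (c * fst p, c * snd p)"

definition grid_adj :: "pt \<Rightarrow> pt \<Rightarrow> bool" where
  "grid_adj p q \<longleftrightarrow> \<bar>fst p - fst q\<bar> + \<bar>snd p - snd q\<bar> = 1"

definition reach :: "pt set set \<Rightarrow> pt \<Rightarrow> pt \<Rightarrow> bool" where
  "reach E = (\<lambda>a b. {a, b} \<in> E)\<^sup>*\<^sup>*"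

definition is_shape :: "shape \<Rightarrow> bool" where
  "is_shape S \<longleftrightarrow> finite (fst S) \<and> fst S \<noteq> {} \<and>
     (\<forall>e\<in>snd S. \<exists>a b. e = {a, b} \<and> a \<in> fst S \<and> b \<in> fst S \<and> grid_adj a b) \<and>
     (\<forall>a\<in>fst S. \<forall>b\<in>fst S. reach (snd S) a b)"

definition translate :: "pt \<Rightarrow> shape \<Rightarrow> shape" where
  "translate v S = ((\<lambda>x. padd x v) ` fst S, (\<lambda>e. (\<lambda>x. padd x v) ` e) ` snd S)"

definition is_path :: "shape \<Rightarrow> pt list \<Rightarrow> bool" where
  "is_path S xs \<longleftrightarrow> xs \<noteq> [] \<and> set xs \<subseteq> fst S \<and> distinct xs \<and>
     (\<forall>i. Suc i < length xs \<longrightarrow> {xs ! i, xs ! Suc i} \<in> snd S)"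

definition has_cycle :: "shape \<Rightarrow> bool" where
  "has_cycle S \<longleftrightarrow> (\<exists>xs. is_path S xs \<and> 3 \<le> length xs \<and> {last xs, hd xs} \<in> snd S)"

definition is_tree_shape :: "shape \<Rightarrow> bool" where
  "is_tree_shape S \<longleftrightarrow> is_shape S \<and> \<not> has_cycle S"

text \<open>Root-to-leaf path for root u0: a path starting at u0 whose last node has
  no child (all its neighbours already lie on the path).\<close>
definition root_leaf_path :: "shape \<Rightarrow> pt \<Rightarrow> pt list \<Rightarrow> bool" where
  "root_leaf_path S u0 xs \<longleftrightarrow> is_path S xs \<and> hd xs = u0 \<and>
     (\<forall>y. {last xs, y} \<in> snd S \<longrightarrow> y \<in> set xs)"

text \<open>Indices of the turning points of a path (endpoints, or nodes whose two
  path-edges are perpendicular). Paths are distinct, so indices correspond to nodes.\<close>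
definition turning_points :: "pt list \<Rightarrow> nat set" where
  "turning_points xs = {i. i < length xs \<and> (i = 0 \<or> i = length xs - 1 \<or>
     (let v1 = xs ! (i - 1); w = xs ! i; v2 = xs ! (i + 1) in
       (fst w - fst v1) * (fst v2 - fst w) + (snd w - snd v1) * (snd v2 - snd w) = 0))}"

definition dirs :: "pt set" where
  "dirs = {(1, 0), (-1, 0), (0, 1), (0, -1)}"

definition separated :: "pt set set \<Rightarrow> pt set \<Rightarrow> pt \<Rightarrow> pt \<Rightarrow> bool" where
  "separated E e r x \<longleftrightarrow> \<not> reach (E - {e}) r x"

text \<open>Displacement of an old node x (as a multiple of the common direction d):
  sum of the contributions of the edge-subdividing operations on its path to r;
  an operation on u toward v = u + d moves the side of the farther endpoint away
  from the other endpoint, i.e. by +d if v is farther and by -d if u is farther.\<close>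
definition shift :: "pt set set \<Rightarrow> pt \<Rightarrow> pt \<Rightarrow> pt set \<Rightarrow> pt \<Rightarrow> int" where
  "shift E r d U x = (\<Sum>u \<in> {u \<in> U. {u, padd u d} \<in> E \<and> separated E {u, padd u d} r x}.
       (if separated E {u, padd u d} r (padd u d) then 1 else -1))"

text \<open>Operation on u subdivides edge {u, u+d} and u is the farther endpoint.\<close>
definition back_op :: "pt set set \<Rightarrow> pt \<Rightarrow> pt \<Rightarrow> pt \<Rightarrow> bool" where
  "back_op E r d u \<longleftrightarrow> {u, padd u d} \<in> E \<and> \<not> separated E {u, padd u d} r (padd u d)"

text \<open>The new node created by the operation on u is attached one unit from its
  parent endpoint q (the endpoint nearer to r), in direction e.\<close>
definition new_par :: "pt set set \<Rightarrow> pt \<Rightarrow> pt \<Rightarrow> pt \<Rightarrow> pt" where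
  "new_par E r d u = (if back_op E r d u then padd u d else u)"

definition new_dir :: "pt set set \<Rightarrow> pt \<Rightarrow> pt \<Rightarrow> pt \<Rightarrow> pt" where
  "new_dir E r d u = (if back_op E r d u then psmul (-1) d else d)"

definition fin_old :: "pt set set \<Rightarrow> pt \<Rightarrow> pt \<Rightarrow> pt set \<Rightarrow> pt \<Rightarrow> pt" where
  "fin_old E r d U x = padd x (psmul (shift E r d U x) d)"

definition fin_new :: "pt set set \<Rightarrow> pt \<Rightarrow> pt \<Rightarrow> pt set \<Rightarrow> pt \<Rightarrow> pt" where
  "fin_new E r d U u =
     (let q = new_par E r d u in padd (fin_old E r d U q) (new_dir E r d u))"

text \<open>Continuous (linear in time) motion: old nodes move from their position to
  their final position; a new node emerges from its parent endpoint's position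
  and moves linearly to its final position.\<close>
definition traj :: "pt set set \<Rightarrow> pt \<Rightarrow> pt \<Rightarrow> pt set \<Rightarrow> real \<Rightarrow> pt + pt \<Rightarrow> real \<times> real" where
  "traj E r d U t z = (case z of
       Inl x \<Rightarrow> (let f = fin_old E r d U x in
                  (of_int (fst x) + t * of_int (fst f - fst x),
                   of_int (snd x) + t * of_int (snd f - snd x)))
     | Inr u \<Rightarrow> (let q = new_par E r d u; f = fin_new E r d U u in
                  (of_int (fst q) + t * of_int (fst f - fst q),
                   of_int (snd q) + t * of_int (snd f - snd q))))"

text \<open>Collision-free: at no time in (0,1] do two distinct nodes occupy the same
  point (time 1 = final configuration).\<close>
definition collision_free :: "shape \<Rightarrow> pt \<Rightarrow> pt \<Rightarrow> pt set \<Rightarrow> bool" where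
  "collision_free S r d U \<longleftrightarrow>
     (\<forall>t::real. 0 < t \<and> t \<le> 1 \<longrightarrow> inj_on (traj (snd S) r d U t) (Inl ` fst S \<union> Inr ` U))"

definition apply_ops :: "shape \<Rightarrow> pt \<Rightarrow> pt \<Rightarrow> pt set \<Rightarrow> shape" where
  "apply_ops S r d U =
     (let E = snd S; F = fin_old E r d U; N = fin_new E r d U in
      (F ` fst S \<union> N ` U,
       {F ` e | e. e \<in> E \<and> \<not> (\<exists>u\<in>U. e = {u, padd u d})}
       \<union> {{F u, N u} | u. u \<in> U}
       \<union> {{N u, F (padd u d)} | u. u \<in> U \<and> {u, padd u d} \<in> E}))"

definition growth_step :: "pt \<Rightarrow> shape \<Rightarrow> shape \<Rightarrow> bool" where
  "growth_step r S S' \<longleftrightarrow> (\<exists>d U. d \<in> dirs \<and> r \<in> fst S \<and> U \<subseteq> fst S \<and>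
      collision_free S r d U \<and> S' = apply_ops S r d U)"

definition grows_in :: "shape \<Rightarrow> nat \<Rightarrow> bool" where
  "grows_in T tf \<longleftrightarrow> (\<exists>a Ss. Ss 0 = ({a}, {}) \<and>
      (\<forall>i<tf. growth_step a (Ss i) (Ss (Suc i))) \<and> (\<exists>v. T = translate v (Ss tf)))"

end

theory Submission
  imports Defs
begin

definition vsub :: "pt \<Rightarrow> pt \<Rightarrow> pt" where "vsub p q = (fst p - fst q, snd p - snd q)"
definition dot :: "pt \<Rightarrow> pt \<Rightarrow> int" where "dot p q = fst p * fst q + snd p * snd q"
definition lv :: "pt list \<Rightarrow> pt" where "lv xs = vsub (last xs) (xs ! (length xs - 2))"

lemma tp_set_snoc:
  assumes "ys \<noteq> []"
  shows "turning_points (ys@[z]) = (turning_points ys - {length ys - 1}) \<union> {length ys} \<union>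
     (if length ys = 1 \<or> dot (lv ys) (vsub z (last ys)) = 0 then {length ys - 1} else {})"
proof -
  define n where "n = length ys"
  have n1: "n \<ge> 1" using assms n_def by (cases ys) auto
  have lastn: "last ys = ys ! (n - 1)" using assms n_def by (simp add: last_conv_nth)
  show ?thesis
    unfolding n_def[symmetric]
  proof (intro set_eqI iffI)
    fix i assume "i \<in> turning_points (ys@[z])"
    then show "i \<in> (turning_points ys - {n - 1}) \<union> {n} \<union>
     (if n = 1 \<or> dot (lv ys) (vsub z (last ys)) = 0 then {n - 1} else {})"
      unfolding turning_points_def Let_def lv_def dot_def vsub_def using n1 lastn
      by (cases "i < n - 1"; cases "i = n - 1"; cases "i = n")
         (auto simp: nth_append n_def numeral_2_eq_2 split: if_splits)
  next
    fix i assume "i \<in> (turning_points ys - {n - 1}) \<union> {n} \<union>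
     (if n = 1 \<or> dot (lv ys) (vsub z (last ys)) = 0 then {n - 1} else {})"
    then show "i \<in> turning_points (ys@[z])"
      unfolding turning_points_def Let_def lv_def dot_def vsub_def using n1 lastn
      by (cases "i < n - 1"; cases "i = n - 1"; cases "i = n")
         (auto simp: nth_append n_def numeral_2_eq_2 split: if_splits)
  qed
qed

lemma tp_finite: "finite (turning_points ys)"
  unfolding turning_points_def by auto

lemma tp_last: "ys \<noteq> [] \<Longrightarrow> length ys - 1 \<in> turning_points ys"
  unfolding turning_points_def by auto

lemma tp_card_snoc:
  assumes "ys \<noteq> []"
  shows "card (turning_points (ys@[z])) = card (turning_points ys) +
     (if length ys = 1 \<or> dot (lv ys) (vsub z (last ys)) = 0 then 1 else 0)"
proof -
  have nin: "length ys \<notin> turning_points ys" unfolding turning_points_def by auto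
  have l: "length ys - 1 \<in> turning_points ys" using tp_last assms by auto
  show ?thesis
  proof (cases "length ys = 1 \<or> dot (lv ys) (vsub z (last ys)) = 0")
    case True
    then have "turning_points (ys@[z]) = insert (length ys) (turning_points ys)"
      using tp_set_snoc[OF assms, of z] l by auto
    then show ?thesis using True nin tp_finite by simp
  next
    case False
    then have "turning_points (ys@[z]) = insert (length ys) (turning_points ys - {length ys - 1})"
      using tp_set_snoc[OF assms, of z] l by auto
    moreover have "length ys \<notin> turning_points ys - {length ys - 1}" using nin by auto
    ultimately have "card (turning_points (ys@[z])) = Suc (card (turning_points ys - {length ys - 1}))"
      using tp_finite by simp
    also have "\<dots> = card (turning_points ys)" using l tp_finite card_Suc_Diff1 by metis
    finally show ?thesis using False by simp
  qed
qed

definition Inv :: "shape \<Rightarrow> bool" where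
  "Inv S \<longleftrightarrow> (\<forall>e\<in>snd S. \<exists>a b. e = {a, b} \<and> a \<in> fst S \<and> b \<in> fst S \<and> a \<noteq> b)"

lemma path_snocD:
  assumes "is_path S (ys@[z])" "ys \<noteq> []"
  shows "is_path S ys" "z \<notin> set ys" "{last ys, z} \<in> snd S" "z \<in> fst S"
proof -
  have A: "\<forall>i. Suc i < length (ys@[z]) \<longrightarrow> {(ys@[z]) ! i, (ys@[z]) ! Suc i} \<in> snd S"
    using assms(1) unfolding is_path_def by blast
  show "is_path S ys" unfolding is_path_def
  proof (intro conjI allI impI)
    fix i assume "Suc i < length ys"
    then show "{ys ! i, ys ! Suc i} \<in> snd S" using A[rule_format, of i] by (simp add: nth_append)
  qed (use assms in \<open>auto simp: is_path_def\<close>)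
  show "z \<notin> set ys" "z \<in> fst S" using assms(1) by (auto simp: is_path_def)
  have "{(ys@[z]) ! (length ys - 1), (ys@[z]) ! Suc (length ys - 1)} \<in> snd S"
    using A[rule_format, of "length ys - 1"] assms(2) by simp
  then show "{last ys, z} \<in> snd S" using assms(2) by (simp add: nth_append last_conv_nth)
qed

lemma path_snocI:
  assumes "is_path S ys" "z \<notin> set ys" "{last ys, z} \<in> snd S" "z \<in> fst S"
  shows "is_path S (ys@[z])"
  unfolding is_path_def
proof (intro conjI allI impI)
  have ne: "ys \<noteq> []" using assms(1) by (simp add: is_path_def)
  fix i assume i: "Suc i < length (ys@[z])"
  show "{(ys@[z]) ! i, (ys@[z]) ! Suc i} \<in> snd S"
  proof (cases "Suc i < length ys")
    case True then show ?thesis using assms(1) by (simp add: nth_append is_path_def)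
  next
    case False
    then have "i = length ys - 1" using i by simp
    then show ?thesis using assms(3) ne by (simp add: nth_append last_conv_nth)
  qed
qed (use assms in \<open>auto simp: is_path_def\<close>)

definition par :: "pt \<Rightarrow> pt \<Rightarrow> bool" where
  "par v w \<longleftrightarrow> (\<exists>c. c \<noteq> 0 \<and> v = psmul c w)"

lemma par_dot: "par v v' \<Longrightarrow> par w w' \<Longrightarrow> (dot v w = 0 \<longleftrightarrow> dot v' w' = 0)"
proof -
  assume "par v v'" "par w w'"
  then obtain c c' where "c \<noteq> 0" "v = psmul c v'" "c' \<noteq> 0" "w = psmul c' w'"
    unfolding par_def by blast
  then have "dot v w = (c * c') * dot v' w'"
    by (simp add: dot_def psmul_def algebra_simps)
  then show ?thesis using \<open>c \<noteq> 0\<close> \<open>c' \<noteq> 0\<close> by simp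
qed

lemma par_refl: "par v v"
  unfolding par_def by (rule exI[of _ 1]) (simp add: psmul_def)

lemma lv_snoc: "ys \<noteq> [] \<Longrightarrow> lv (ys @ [z]) = vsub z (last ys)"
  unfolding lv_def by (simp add: nth_append last_conv_nth)

definition Arel :: "shape \<Rightarrow> pt \<Rightarrow> (pt \<Rightarrow> pt) \<Rightarrow> pt list \<Rightarrow> pt list \<Rightarrow> bool" where
  "Arel S r F ys xs \<longleftrightarrow> is_path S xs \<and> hd xs = r \<and> F ` set xs \<subseteq> set ys \<and>
     card (turning_points ys) \<le> card (turning_points xs) \<and> last ys = F (last xs) \<and>
     (length xs = 1 \<longleftrightarrow> length ys = 1) \<and> (length ys \<noteq> 1 \<longrightarrow> par (lv ys) (lv xs))"

lemma ext_A:
  assumes A: "Arel S r F ys xs" and ne: "ys \<noteq> []" and z: "z \<notin> set ys" and y: "y \<in> fst S"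
    and e: "{last xs, y} \<in> snd S" and zF: "z = F y"
    and v: "vsub (F y) (F (last xs)) = vsub y (last xs)"
  shows "Arel S r F (ys @ [z]) (xs @ [y])"
proof -
  have p: "is_path S xs" and xne: "xs \<noteq> []" using A by (auto simp: Arel_def is_path_def)
  have yn: "y \<notin> set xs" using A z zF by (auto simp: Arel_def)
  have p': "is_path S (xs @ [y])" using path_snocI[OF p yn e y] .
  have ly: "last ys = F (last xs)" using A by (simp add: Arel_def)
  have len: "length xs = 1 \<longleftrightarrow> length ys = 1" using A by (simp add: Arel_def)
  have lvv: "lv (ys @ [z]) = lv (xs @ [y])" using lv_snoc[OF ne] lv_snoc[OF xne] ly zF v by simp
  have cond: "(length ys = 1 \<or> dot (lv ys) (vsub z (last ys)) = 0) \<longleftrightarrow>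
              (length xs = 1 \<or> dot (lv xs) (vsub y (last xs)) = 0)"
  proof (cases "length ys = 1")
    case False
    then have "par (lv ys) (lv xs)" using A by (simp add: Arel_def)
    moreover have "par (vsub z (last ys)) (vsub y (last xs))" using ly zF v par_refl by simp
    ultimately show ?thesis using par_dot len False by blast
  qed (use len in simp)
  have "card (turning_points (ys @ [z])) \<le> card (turning_points (xs @ [y]))"
    using tp_card_snoc[OF ne, of z] tp_card_snoc[OF xne, of y] cond A by (simp add: Arel_def)
  then show ?thesis using A p' xne ne lvv zF par_refl by (auto simp: Arel_def)
qed

lemma ext_B:
  assumes A: "Arel S r F ys0 xs" and ne: "ys0 \<noteq> []" and z: "z \<notin> set (ys0 @ [n])"
    and w: "w \<in> fst S" and e: "{last xs, w} \<in> snd S" and zF: "z = F w"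
    and p1: "par (vsub n (F (last xs))) (vsub w (last xs))"
    and p2: "par (vsub z n) (vsub w (last xs))"
    and nz: "dot (vsub n (F (last xs))) (vsub z n) \<noteq> 0"
  shows "Arel S r F (ys0 @ [n] @ [z]) (xs @ [w])"
proof -
  have p: "is_path S xs" and xne: "xs \<noteq> []" using A by (auto simp: Arel_def is_path_def)
  have yn: "w \<notin> set xs" using A z zF by (auto simp: Arel_def)
  have p': "is_path S (xs @ [w])" using path_snocI[OF p yn e w] .
  have ly: "last ys0 = F (last xs)" using A by (simp add: Arel_def)
  have len: "length xs = 1 \<longleftrightarrow> length ys0 = 1" using A by (simp add: Arel_def)
  have ne2: "ys0 @ [n] \<noteq> []" by simp
  have l2: "lv (ys0 @ [n]) = vsub n (F (last xs))" using lv_snoc[OF ne] ly by simp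
  have c1: "card (turning_points ((ys0 @ [n]) @ [z])) = card (turning_points (ys0 @ [n]))"
    using tp_card_snoc[OF ne2, of z] l2 nz ne by simp
  have cond: "(length ys0 = 1 \<or> dot (lv ys0) (vsub n (last ys0)) = 0) \<longleftrightarrow>
              (length xs = 1 \<or> dot (lv xs) (vsub w (last xs)) = 0)"
  proof (cases "length ys0 = 1")
    case False
    then have "par (lv ys0) (lv xs)" using A by (simp add: Arel_def)
    then show ?thesis using par_dot[OF _ p1] len False ly by auto
  qed (use len in simp)
  have "card (turning_points ((ys0 @ [n]) @ [z])) \<le> card (turning_points (xs @ [w]))"
    using c1 tp_card_snoc[OF ne, of n] tp_card_snoc[OF xne, of w] cond A by (simp add: Arel_def)
  moreover have "lv ((ys0 @ [n]) @ [z]) = vsub z n" using lv_snoc[OF ne2] by simp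
  moreover have "lv (xs @ [w]) = vsub w (last xs)" using lv_snoc[OF xne] by simp
  ultimately show ?thesis using A p' xne ne p2 zF by (auto simp: Arel_def)
qed

locale stepc =
  fixes S :: shape and r d :: pt and U :: "pt set"
  assumes inv: "Inv S" and rV: "r \<in> fst S" and UV: "U \<subseteq> fst S" and dd: "d \<in> dirs"
    and cf: "collision_free S r d U"
begin

abbreviation "F \<equiv> fin_old (snd S) r d U"
abbreviation "N \<equiv> fin_new (snd S) r d U"

lemma traj1: "traj (snd S) r d U 1 (Inl x) = (of_int (fst (F x)), of_int (snd (F x)))"
             "traj (snd S) r d U 1 (Inr u) = (of_int (fst (N u)), of_int (snd (N u)))"
  by (simp_all add: traj_def Let_def)

lemma inj1: "inj_on (traj (snd S) r d U 1) (Inl ` fst S \<union> Inr ` U)"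
  using cf unfolding collision_free_def by auto

lemma injF: "x \<in> fst S \<Longrightarrow> y \<in> fst S \<Longrightarrow> F x = F y \<Longrightarrow> x = y"
proof -
  assume a: "x \<in> fst S" "y \<in> fst S" "F x = F y"
  then have "traj (snd S) r d U 1 (Inl x) = traj (snd S) r d U 1 (Inl y)" by (simp add: traj1)
  then have "Inl x = (Inl y :: pt + pt)" using inj1 a unfolding inj_on_def by blast
  then show "x = y" by simp
qed

lemma injN: "u \<in> U \<Longrightarrow> v \<in> U \<Longrightarrow> N u = N v \<Longrightarrow> u = v"
proof -
  assume a: "u \<in> U" "v \<in> U" "N u = N v"
  then have "traj (snd S) r d U 1 (Inr u) = traj (snd S) r d U 1 (Inr v)" by (simp add: traj1)
  then have "Inr u = (Inr v :: pt + pt)" using inj1 a unfolding inj_on_def by blast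
  then show "u = v" by simp
qed

lemma FN: "x \<in> fst S \<Longrightarrow> u \<in> U \<Longrightarrow> F x \<noteq> N u"
proof
  assume a: "x \<in> fst S" "u \<in> U" "F x = N u"
  then have "traj (snd S) r d U 1 (Inl x) = traj (snd S) r d U 1 (Inr u)"
    by (simp add: traj1 prod_eq_iff)
  then have "Inl x = (Inr u :: pt + pt)" using inj1 a unfolding inj_on_def by blast
  then show False by simp
qed

lemma Fr: "F r = r"
proof -
  have "shift (snd S) r d U r = 0"
    unfolding shift_def separated_def reach_def by simp
  then show ?thesis by (simp add: fin_old_def padd_def psmul_def)
qed

lemma reach_edge: "reach E a x \<Longrightarrow> {x, y} \<in> E \<Longrightarrow> reach E a y"
  unfolding reach_def by (rule rtranclp.rtrancl_into_rtrancl)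

lemma Fedge:
  assumes "{x, y} \<in> snd S" "\<not> (\<exists>u\<in>U. {x, y} = {u, padd u d})"
  shows "vsub (F y) (F x) = vsub y x"
proof -
  let ?E = "snd S"
  have "{u \<in> U. {u, padd u d} \<in> ?E \<and> separated ?E {u, padd u d} r x}
      = {u \<in> U. {u, padd u d} \<in> ?E \<and> separated ?E {u, padd u d} r y}"
  proof (intro Collect_cong conj_cong refl)
    fix u assume u: "u \<in> U"
    then have ne: "{x, y} \<noteq> {u, padd u d}" using assms(2) by blast
    have e1: "{x, y} \<in> ?E - {{u, padd u d}}" using assms(1) ne by blast
    have e2: "{y, x} \<in> ?E - {{u, padd u d}}" using e1 by (simp add: insert_commute)
    show "separated ?E {u, padd u d} r x = separated ?E {u, padd u d} r y"
      unfolding separated_def using reach_edge[OF _ e1] reach_edge[OF _ e2] by blast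
  qed
  then have "shift ?E r d U x = shift ?E r d U y" unfolding shift_def by simp
  then show ?thesis by (simp add: fin_old_def vsub_def padd_def psmul_def)
qed

lemma Fd: "\<exists>m. vsub (F (padd u d)) (F u) = psmul m d"
  by (rule exI[of _ "1 + shift (snd S) r d U (padd u d) - shift (snd S) r d U u"])
     (simp add: fin_old_def vsub_def padd_def psmul_def algebra_simps)

lemma Nd: "\<exists>m. vsub (N u) (F u) = psmul m d"
proof (cases "back_op (snd S) r d u")
  case True
  obtain m where m: "vsub (F (padd u d)) (F u) = psmul m d" using Fd by blast
  show ?thesis using True m
    by (intro exI[of _ "m - 1"]) (simp add: fin_new_def new_par_def new_dir_def Let_def vsub_def padd_def psmul_def algebra_simps prod_eq_iff)
next
  case False
  then show ?thesis
    by (intro exI[of _ 1]) (simp add: fin_new_def new_par_def new_dir_def Let_def vsub_def padd_def psmul_def)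
qed

lemma edgeV: "{a, b} \<in> snd S \<Longrightarrow> a \<in> fst S \<and> b \<in> fst S \<and> a \<noteq> b"
  using inv unfolding Inv_def by (metis doubleton_eq_iff)

lemma newV: "fst (apply_ops S r d U) = F ` fst S \<union> N ` U"
  by (simp add: apply_ops_def Let_def)

lemma newE: "z \<in> snd (apply_ops S r d U) \<longleftrightarrow>
   (\<exists>e. z = F ` e \<and> e \<in> snd S \<and> \<not> (\<exists>u\<in>U. e = {u, padd u d})) \<or>
   (\<exists>u. z = {F u, N u} \<and> u \<in> U) \<or>
   (\<exists>u. z = {N u, F (padd u d)} \<and> u \<in> U \<and> {u, padd u d} \<in> snd S)"
  by (simp add: apply_ops_def Let_def)

lemma edgeF:
  assumes x: "x \<in> fst S" and e: "{F x, z} \<in> snd (apply_ops S r d U)"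
  shows "(\<exists>y. z = F y \<and> y \<in> fst S \<and> {x, y} \<in> snd S \<and> \<not> (\<exists>u\<in>U. {x, y} = {u, padd u d})) \<or>
         (\<exists>u\<in>U. z = N u \<and> (x = u \<or> (x = padd u d \<and> {u, padd u d} \<in> snd S)))"
  using e unfolding newE
proof (elim disjE exE conjE)
  fix e0 assume h: "{F x, z} = F ` e0" "e0 \<in> snd S" "\<not> (\<exists>u\<in>U. e0 = {u, padd u d})"
  obtain a b where ab: "e0 = {a, b}" "a \<in> fst S" "b \<in> fst S" "a \<noteq> b"
    using inv h(2) unfolding Inv_def by blast
  have "{F x, z} = {F a, F b}" using h(1) ab by simp
  then have "(F x = F a \<and> z = F b) \<or> (F x = F b \<and> z = F a)" by (simp only: doubleton_eq_iff)
  then show ?thesis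
  proof
    assume c: "F x = F a \<and> z = F b"
    then have "x = a" using injF x ab(2) by blast
    then have "z = F b \<and> b \<in> fst S \<and> {x, b} \<in> snd S \<and> \<not> (\<exists>u\<in>U. {x, b} = {u, padd u d})"
      using c h ab by blast
    then show ?thesis by blast
  next
    assume c: "F x = F b \<and> z = F a"
    then have "x = b" using injF x ab(3) by blast
    moreover have "{b, a} = e0" using ab by blast
    ultimately have "z = F a \<and> a \<in> fst S \<and> {x, a} \<in> snd S \<and> \<not> (\<exists>u\<in>U. {x, a} = {u, padd u d})"
      using c h ab by metis
    then show ?thesis by blast
  qed
next
  fix u assume h: "{F x, z} = {F u, N u}" "u \<in> U"
  have "F x \<noteq> N u" using FN x h(2) .
  moreover have "F u \<noteq> N u" using FN UV h(2) by blast
  ultimately have "F x = F u \<and> z = N u" using h(1) by (metis doubleton_eq_iff)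
  moreover then have "x = u" using injF x UV h(2) by blast
  ultimately show ?thesis using h(2) by blast
next
  fix u assume h: "{F x, z} = {N u, F (padd u d)}" "u \<in> U" "{u, padd u d} \<in> snd S"
  have ud: "padd u d \<in> fst S" using edgeV h(3) by blast
  have "F x \<noteq> N u" using FN x h(2) .
  moreover have "F (padd u d) \<noteq> N u" using FN ud h(2) by blast
  ultimately have "F x = F (padd u d) \<and> z = N u" using h(1) by (metis doubleton_eq_iff)
  moreover then have "x = padd u d" using injF x ud by blast
  ultimately show ?thesis using h by blast
qed
lemma edgeN:
  assumes u: "u \<in> U" and e: "{N u, z} \<in> snd (apply_ops S r d U)"
  shows "z = F u \<or> ({u, padd u d} \<in> snd S \<and> z = F (padd u d))"
  using e unfolding newE
proof (elim disjE exE conjE)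
  fix e0 assume h: "{N u, z} = F ` e0" "e0 \<in> snd S"
  obtain a b where ab: "e0 = {a, b}" "a \<in> fst S" "b \<in> fst S"
    using inv h(2) unfolding Inv_def by blast
  have "N u \<in> {F a, F b}" using h(1) ab by (metis image_insert image_empty insertI1)
  then have "N u = F a \<or> N u = F b" by simp
  then show ?thesis using FN[OF ab(2) u] FN[OF ab(3) u] by simp
next
  fix v assume h: "{N u, z} = {F v, N v}" "v \<in> U"
  have vV: "v \<in> fst S" using h(2) UV by blast
  have "N u \<noteq> F v" using FN[OF vV u] by simp
  then have "N u = N v \<and> z = F v" using h(1) doubleton_eq_iff[of "N u" z "F v" "N v"] by blast
  then show ?thesis using injN[OF u h(2)] by blast
next
  fix v assume h: "{N u, z} = {N v, F (padd v d)}" "v \<in> U" "{v, padd v d} \<in> snd S"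
  have ud: "padd v d \<in> fst S" using edgeV h(3) by blast
  have "N u \<noteq> F (padd v d)" using FN[OF ud u] by simp
  then have "N u = N v \<and> z = F (padd v d)" using h(1) doubleton_eq_iff[of "N u" z "N v" "F (padd v d)"] by blast
  then show ?thesis using injN[OF u h(2)] h(3) by blast
qed

lemma onl: "P \<in> {F u, F (padd u d), N u} \<Longrightarrow> \<exists>m. vsub P (F u) = psmul m d"
proof -
  assume "P \<in> {F u, F (padd u d), N u}"
  moreover have "vsub (F u) (F u) = psmul 0 d" by (simp add: vsub_def psmul_def)
  ultimately show ?thesis using Fd Nd by blast
qed

lemma two_pts:
  assumes "vsub p c0 = psmul a d" "vsub q c0 = psmul b d" "p \<noteq> q"
  shows "\<exists>m. m \<noteq> 0 \<and> vsub p q = psmul m d"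
proof (intro exI conjI)
  show "vsub p q = psmul (a - b) d" using assms(1,2)
    by (auto simp: vsub_def psmul_def prod_eq_iff algebra_simps)
  show "a - b \<noteq> 0"
  proof
    assume "a - b = 0"
    then have "vsub p c0 = vsub q c0" using assms by simp
    then show False using assms(3) by (auto simp: vsub_def prod_eq_iff)
  qed
qed

lemma dd1: "dot d d = 1" using dd by (auto simp: dirs_def dot_def)

lemma par_dd: "m \<noteq> 0 \<Longrightarrow> s = 1 \<or> s = -1 \<Longrightarrow> par (psmul m d) (psmul s d)"
  unfolding par_def by (rule exI[of _ "m * s"]) (auto simp: psmul_def)

lemma dot_dd: "m1 \<noteq> 0 \<Longrightarrow> m2 \<noteq> 0 \<Longrightarrow> dot (psmul m1 d) (psmul m2 d) \<noteq> 0"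
proof -
  assume "m1 \<noteq> 0" "m2 \<noteq> 0"
  have "dot (psmul m1 d) (psmul m2 d) = m1 * m2 * dot d d" by (simp add: dot_def psmul_def algebra_simps)
  then show ?thesis using dd1 \<open>m1 \<noteq> 0\<close> \<open>m2 \<noteq> 0\<close> by simp
qed

abbreviation "Bst ys \<equiv> (\<exists>ys0 u xs. ys = ys0 @ [N u] \<and> ys0 \<noteq> [] \<and> u \<in> U \<and> Arel S r F ys0 xs \<and>
     (last xs = u \<or> (last xs = padd u d \<and> {u, padd u d} \<in> snd S)))"

lemma contract:
  "is_path (apply_ops S r d U) ys \<Longrightarrow> hd ys = r \<Longrightarrow> (\<exists>xs. Arel S r F ys xs) \<or> Bst ys"
proof (induction ys rule: rev_induct)
  case Nil then show ?case by (simp add: is_path_def)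
next
  case (snoc z ys)
  show ?case
  proof (cases "ys = []")
    case True
    then have zr: "z = r" using snoc.prems by simp
    have "is_path S [r]" using rV by (simp add: is_path_def)
    then have "Arel S r F [r] [r]" using Fr by (simp add: Arel_def)
    then show ?thesis using True zr by auto
  next
    case ne: False
    note pd = path_snocD[OF snoc.prems(1) ne]
    have hy: "hd ys = r" using snoc.prems(2) ne by simp
    from snoc.IH[OF pd(1) hy] show ?thesis
    proof
      assume "\<exists>xs. Arel S r F ys xs"
      then obtain xs where A: "Arel S r F ys xs" by blast
      have "is_path S xs" using A by (simp add: Arel_def)
      then have xne: "xs \<noteq> []" and xsV: "set xs \<subseteq> fst S" by (simp_all add: is_path_def)
      then have xV: "last xs \<in> fst S" using last_in_set by blast
      have ly: "last ys = F (last xs)" using A by (simp add: Arel_def)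
      have eF: "{F (last xs), z} \<in> snd (apply_ops S r d U)" using pd(3) ly by simp
      from edgeF[OF xV eF]
      show ?thesis
      proof (elim disjE exE conjE bexE)
        fix y assume h: "z = F y" "y \<in> fst S" "{last xs, y} \<in> snd S"
          "\<not> (\<exists>u\<in>U. {last xs, y} = {u, padd u d})"
        have "Arel S r F (ys @ [z]) (xs @ [y])"
          using ext_A[OF A ne pd(2) h(2) h(3) h(1) Fedge[OF h(3) h(4)]] .
        then show ?thesis by blast
      next
        fix u assume "u \<in> U" "z = N u" "last xs = u"
        then show ?thesis using A ne by blast
      next
        fix u assume "u \<in> U" "z = N u" "last xs = padd u d" "{u, padd u d} \<in> snd S"
        then show ?thesis using A ne by blast
      qed
    next
      assume "Bst ys"
      then obtain ys0 u xs where B: "ys = ys0 @ [N u]" "ys0 \<noteq> []" "u \<in> U" "Arel S r F ys0 xs"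
        "last xs = u \<or> (last xs = padd u d \<and> {u, padd u d} \<in> snd S)" by blast
      define x where "x = last xs"
      have ly: "last ys0 = F x" using B(4) by (simp add: Arel_def x_def)
      have Fxin: "F x \<in> set ys" using B(1,2) ly last_in_set[OF B(2)] by simp
      have zne: "z \<noteq> F x" using pd(2) Fxin by blast
      have eN: "{N u, z} \<in> snd (apply_ops S r d U)" using pd(3) B(1) by simp
      have uV: "u \<in> fst S" using B(3) UV by blast
      obtain w s where w: "z = F w" "{x, w} \<in> snd S" "vsub w x = psmul s d" "s = 1 \<or> s = -1"
        "x \<in> {u, padd u d}" "w \<in> {u, padd u d}"
      proof (cases "x = u")
        case True
        then have "z = F (padd u d)" "{u, padd u d} \<in> snd S" using edgeN[OF B(3) eN] zne by auto
        moreover have "vsub (padd u d) u = psmul 1 d" by (simp add: vsub_def padd_def psmul_def)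
        ultimately show ?thesis using that True by blast
      next
        case False
        then have xe: "x = padd u d" "{u, padd u d} \<in> snd S" using B(5) x_def by auto
        then have "z = F u" using edgeN[OF B(3) eN] zne by auto
        moreover have "vsub u (padd u d) = psmul (-1) d" by (simp add: vsub_def padd_def psmul_def)
        moreover have "{padd u d, u} \<in> snd S" using xe by (simp add: insert_commute)
        ultimately show ?thesis using that xe by blast
      qed
      have wV: "w \<in> fst S" using edgeV w(2) by blast
      have xV: "x \<in> fst S" using edgeV w(2) by blast
      obtain a1 where a1: "vsub (N u) (F u) = psmul a1 d" using onl by blast
      obtain a2 where a2: "vsub (F x) (F u) = psmul a2 d" using onl w(5) by blast
      obtain a3 where a3: "vsub z (F u) = psmul a3 d" using onl w(6) w(1) by blast
      have n1: "N u \<noteq> F x" using FN[OF xV B(3)] by simp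
      have n2: "z \<noteq> N u" using FN[OF wV B(3)] w(1) by simp
      obtain m1 where m1: "m1 \<noteq> 0" "vsub (N u) (F x) = psmul m1 d" using two_pts[OF a1 a2 n1] by blast
      obtain m2 where m2: "m2 \<noteq> 0" "vsub z (N u) = psmul m2 d" using two_pts[OF a3 a1 n2] by blast
      have "Arel S r F (ys0 @ [N u] @ [z]) (xs @ [w])"
        using ext_B[OF B(4) B(2), of z "N u" w] pd(2) B(1) wV w(1,2,3) x_def
          par_dd[OF m1(1) w(4)] par_dd[OF m2(1) w(4)] m1(2) m2(2) dot_dd[OF m1(1) m2(1)]
        by simp
      then show ?thesis using B(1) by auto
    qed
  qed
qed

lemma step_bound:
  assumes "is_path (apply_ops S r d U) ys" "hd ys = r"
  shows "\<exists>xs. is_path S xs \<and> hd xs = r \<and> card (turning_points ys) \<le> card (turning_points xs) + 1"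
  using contract[OF assms]
proof
  assume "\<exists>xs. Arel S r F ys xs"
  then show ?thesis by (auto simp: Arel_def)
next
  assume "Bst ys"
  then obtain ys0 u xs where B: "ys = ys0 @ [N u]" "ys0 \<noteq> []" "Arel S r F ys0 xs" by blast
  have "card (turning_points ys) \<le> card (turning_points ys0) + 1"
    using tp_card_snoc[OF B(2), of "N u"] B(1) by simp
  then show ?thesis using B(3) by (auto simp: Arel_def)
qed

lemma inv_step: "Inv (apply_ops S r d U)"
  unfolding Inv_def
proof
  fix e assume "e \<in> snd (apply_ops S r d U)"
  then show "\<exists>a b. e = {a, b} \<and> a \<in> fst (apply_ops S r d U) \<and> b \<in> fst (apply_ops S r d U) \<and> a \<noteq> b"
    unfolding newE newV
  proof (elim disjE exE conjE)
    fix e0 assume h: "e = F ` e0" "e0 \<in> snd S"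
    obtain a b where ab: "e0 = {a, b}" "a \<in> fst S" "b \<in> fst S" "a \<noteq> b"
      using inv h(2) unfolding Inv_def by blast
    have "F a \<noteq> F b" using injF ab by blast
    then show "\<exists>a b. e = {a, b} \<and> a \<in> F ` fst S \<union> N ` U \<and> b \<in> F ` fst S \<union> N ` U \<and> a \<noteq> b"
      using h ab by blast
  next
    fix u assume h: "e = {F u, N u}" "u \<in> U"
    have "F u \<noteq> N u" using FN h(2) UV by blast
    then show "\<exists>a b. e = {a, b} \<and> a \<in> F ` fst S \<union> N ` U \<and> b \<in> F ` fst S \<union> N ` U \<and> a \<noteq> b"
      using h UV by blast
  next
    fix u assume h: "e = {N u, F (padd u d)}" "u \<in> U" "{u, padd u d} \<in> snd S"
    have ud: "padd u d \<in> fst S" using edgeV h(3) by blast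
    have "F (padd u d) \<noteq> N u" using FN h(2) ud by blast
    then show "\<exists>a b. e = {a, b} \<and> a \<in> F ` fst S \<union> N ` U \<and> b \<in> F ` fst S \<union> N ` U \<and> a \<noteq> b"
      using h ud by blast
  qed
qed

lemma r_step: "r \<in> fst (apply_ops S r d U)"
  using Fr rV unfolding newV by (metis UnI1 image_eqI)

end

lemma tp_le_len: "card (turning_points ys) \<le> length ys"
proof -
  have "turning_points ys \<subseteq> {..<length ys}" unfolding turning_points_def by auto
  then show ?thesis using card_mono[of "{..<length ys}"] by fastforce
qed

definition untr :: "pt \<Rightarrow> pt \<Rightarrow> pt" where "untr v p = (fst p - fst v, snd p - snd v)"

lemma untr_padd[simp]: "untr v (padd p v) = p" by (simp add: untr_def padd_def)

lemma untr_diff[simp]: "fst (untr v p) - fst (untr v q) = fst p - fst q"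
  "snd (untr v p) - snd (untr v q) = snd p - snd q"
  by (simp_all add: untr_def)

lemma tp_untr: "turning_points (map (untr v) xs) = turning_points xs"
proof (rule set_eqI)
  fix i
  show "i \<in> turning_points (map (untr v) xs) \<longleftrightarrow> i \<in> turning_points xs"
  proof (cases "0 < i \<and> Suc i < length xs")
    case True
    then have "i - 1 < length xs" "i < length xs" by auto
    then show ?thesis using True unfolding turning_points_def Let_def by simp
  next
    case False then show ?thesis unfolding turning_points_def by auto
  qed
qed

lemma path_untr:
  assumes "is_path (translate v S) xs"
  shows "is_path S (map (untr v) xs)"
proof -
  have s: "set xs \<subseteq> (\<lambda>x. padd x v) ` fst S" using assms by (simp add: is_path_def translate_def)
  have inj: "inj (untr v)" by (rule injI) (auto simp: untr_def prod_eq_iff)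
  show ?thesis unfolding is_path_def
  proof (intro conjI allI impI)
    show "map (untr v) xs \<noteq> []" using assms by (simp add: is_path_def)
    show "set (map (untr v) xs) \<subseteq> fst S" using s by auto
    show "distinct (map (untr v) xs)" using assms inj_on_subset[OF inj subset_UNIV] by (simp add: is_path_def distinct_map)
  next
    fix i assume i: "Suc i < length (map (untr v) xs)"
    then have "{xs ! i, xs ! Suc i} \<in> snd (translate v S)" using assms by (simp add: is_path_def)
    then obtain e where e: "e \<in> snd S" "{xs ! i, xs ! Suc i} = (\<lambda>x. padd x v) ` e"
      by (auto simp: translate_def)
    then have "untr v ` {xs ! i, xs ! Suc i} = e" by (simp add: image_image)
    then show "{map (untr v) xs ! i, map (untr v) xs ! Suc i} \<in> snd S" using e(1) i by simp
  qed
qed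

theorem theorem3p4:
  fixes T :: shape and k tf :: nat
  assumes "is_tree_shape T"
    and "0 < k"
    and "\<forall>u0\<in>fst T. \<exists>xs. root_leaf_path T u0 xs \<and> k \<le> card (turning_points xs)"
    and "grows_in T tf"
  shows "k - 1 \<le> tf"
proof -
  obtain a Ss v where S0: "Ss 0 = ({a}, {})" and st: "\<forall>i<tf. growth_step a (Ss i) (Ss (Suc i))"
    and Tv: "T = translate v (Ss tf)"
    using assms(4) unfolding grows_in_def by blast
  have main: "i \<le> tf \<Longrightarrow> Inv (Ss i) \<and> a \<in> fst (Ss i) \<and>
      (\<forall>ys. is_path (Ss i) ys \<and> hd ys = a \<longrightarrow> card (turning_points ys) \<le> i + 1)" for i
  proof (induction i)
    case 0
    have "card (turning_points ys) \<le> 1" if "is_path (Ss 0) ys" for ys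
    proof -
      have "set ys \<subseteq> {a}" "distinct ys" using that S0 by (auto simp: is_path_def)
      then have "length ys \<le> 1" using distinct_card[of ys] card_mono[of "{a}" "set ys"] by simp
      then show ?thesis using tp_le_len[of ys] by simp
    qed
    then show ?case using S0 by (simp add: Inv_def)
  next
    case (Suc i)
    then have IH: "Inv (Ss i)" "a \<in> fst (Ss i)"
      "\<forall>ys. is_path (Ss i) ys \<and> hd ys = a \<longrightarrow> card (turning_points ys) \<le> i + 1" by auto
    have "growth_step a (Ss i) (Ss (Suc i))" using st Suc.prems by simp
    then obtain d U where g: "d \<in> dirs" "U \<subseteq> fst (Ss i)" "collision_free (Ss i) a d U"
      "Ss (Suc i) = apply_ops (Ss i) a d U" unfolding growth_step_def by blast
    interpret stepc "Ss i" a d U using IH g by unfold_locales auto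
    have "card (turning_points ys) \<le> Suc i + 1" if ys1: "is_path (Ss (Suc i)) ys" "hd ys = a" for ys
    proof -
      obtain xs where "is_path (Ss i) xs" "hd xs = a" "card (turning_points ys) \<le> card (turning_points xs) + 1"
        using step_bound[of ys] ys1 g(4) by auto
      then show ?thesis using IH(3) by fastforce
    qed
    then show ?case using inv_step r_step g(4) by simp
  qed
  have aT: "padd a v \<in> fst T" using main[of tf] Tv by (simp add: translate_def)
  then obtain xs where xs: "root_leaf_path T (padd a v) xs" "k \<le> card (turning_points xs)"
    using assms(3) by blast
  have p: "is_path (Ss tf) (map (untr v) xs)" using path_untr xs(1) Tv by (simp add: root_leaf_path_def)
  have h: "hd (map (untr v) xs) = a" using xs(1) by (simp add: root_leaf_path_def is_path_def hd_map)
  have "card (turning_points (map (untr v) xs)) \<le> tf + 1" using main[of tf] p h by blast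
  then show ?thesis using xs(2) tp_untr[of v xs] by simp
qed

end
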